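(* Let $A=(a_0,\dots,a_r)$ be a complex $(c+1)\times(r+1)$ matrix of full rank with pairwise linearly independent columns. Then there exists a unique (up to order of summands) decomposition $\mathbb{C}^{c+1}=V_1\oplus\dots\oplus V_t$ into nonzero linear subspaces such that: (i) for each $0\le i\le r$ there is $j(i)\in\{1,\dots,t\}$ with $a_i\in V_{j(i)}$; (ii) whenever $\mathbb{C}^{c+1}=V'_1\oplus\dots\oplus V'_s$ is any decomposition into linear subspaces satisfying (i), then for every $1\le i\le t$ there is $1\le j\le s$ with $V_i\subseteq V'_j$. *)

theory Defs
  imports "HOL-Analysis.Analysis" "HOL-Library.Multiset"
begin

definition is_direct_sum_decomp :: "('a::field ^ 'n) set list \<Rightarrow> bool" where
  "is_direct_sum_decomp Vs \<longleftrightarrow>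
     (\<forall>V \<in> set Vs. vec.subspace V) \<and>
     (\<forall>v. \<exists>!u :: nat \<Rightarrow> 'a ^ 'n.
            (\<forall>j < length Vs. u j \<in> Vs ! j) \<and> (\<forall>j \<ge> length Vs. u j = 0) \<and>
            v = (\<Sum>j < length Vs. u j))"

definition columns_in_summands :: "'a::field ^ 'm ^ 'n \<Rightarrow> ('a ^ 'n) set list \<Rightarrow> bool" where
  "columns_in_summands A Vs \<longleftrightarrow> (\<forall>i. \<exists>V \<in> set Vs. column i A \<in> V)"

end

theory Submission imports Defs begin

lemma cols_span:
  fixes A :: "'a::field ^ 'm ^ 'n"
  assumes full_rank: "rank A = CARD('n)"
  shows "vec.span (range (\<lambda>i. column i A)) = UNIV"
proof -
  have rows_eq: "rows A = range (\<lambda>i. row i A)" by (auto simp: rows_def)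
  have fin: "finite (rows A)" by (simp add: rows_eq)
  have d: "vec.dim (rows A) = CARD('n)" using full_rank by (simp add: row_rank_def_gen)
  have "vec.dim (rows A) \<le> card (rows A)"
    using vec.dim_le_card[OF vec.span_superset fin] .
  moreover have "card (rows A) \<le> CARD('n)" unfolding rows_eq by (rule card_image_le) simp
  ultimately have c: "card (rows A) = CARD('n)" using d by linarith
  have inj: "inj (\<lambda>i. row i A)"
    using c unfolding rows_eq by (simp add: eq_card_imp_inj_on)
  have ind: "vec.independent (rows A)"
    using vec.card_eq_dim[of "rows A" "rows A"] c d fin vec.span_superset by auto
  have "\<forall>c. (\<Sum>i\<in>UNIV. c i *s row i A) = 0 \<longrightarrow> (\<forall>i. c i = 0)"
  proof (intro allI impI)
    fix c :: "'n \<Rightarrow> 'a" and i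
    assume s: "(\<Sum>i\<in>UNIV. c i *s row i A) = 0"
    let ?g = "inv (\<lambda>i. row i A)"
    have gi: "\<And>i. ?g (row i A) = i" using inj by (meson inv_f_f)
    have "(\<Sum>v\<in>rows A. c (?g v) *s v) = (\<Sum>i\<in>UNIV. c (?g (row i A)) *s row i A)"
      unfolding rows_eq by (subst sum.reindex[OF inj]) simp
    also have "\<dots> = 0" using s by (simp add: gi)
    finally have "\<forall>v\<in>rows A. c (?g v) = 0" using ind unfolding vec.independent_explicit
      by (elim conjE allE[where x="\<lambda>v. c (?g v)"]) simp
    then show "c i = 0" by (auto simp: rows_eq gi)
  qed
  then have "\<exists>B. A ** B = mat 1" by (simp add: matrix_right_invertible_independent_rows)
  then have "vec.span (columns A) = UNIV" by (simp add: matrix_right_invertible_span_columns)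
  moreover have "columns A = range (\<lambda>i. column i A)" by (auto simp: columns_def)
  ultimately show ?thesis by simp
qed

definition dsum :: "'i set \<Rightarrow> ('i \<Rightarrow> ('a::field ^ 'n) set) \<Rightarrow> bool" where
  "dsum I f \<longleftrightarrow> finite I \<and> (\<forall>i\<in>I. vec.subspace (f i)) \<and>
     (\<forall>v. \<exists>u. (\<forall>i\<in>I. u i \<in> f i) \<and> v = (\<Sum>i\<in>I. u i)) \<and>
     (\<forall>u. (\<forall>i\<in>I. u i \<in> f i) \<and> (\<Sum>i\<in>I. u i) = 0 \<longrightarrow> (\<forall>i\<in>I. u i = 0))"

lemma dsum_indep:
  assumes "dsum I f" "\<And>i. i \<in> I \<Longrightarrow> u i \<in> f i" "(\<Sum>i\<in>I. u i) = 0" "i \<in> I"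
  shows "u i = 0"
  using assms unfolding dsum_def by blast

lemma dsum_ex:
  assumes "dsum I f"
  obtains u where "\<And>i. i \<in> I \<Longrightarrow> u i \<in> f i" "v = (\<Sum>i\<in>I. u i)"
  using assms unfolding dsum_def by blast

lemma dsum_uniq:
  assumes d: "dsum I f" and a: "\<And>i. i \<in> I \<Longrightarrow> a i \<in> f i"
    and b: "\<And>i. i \<in> I \<Longrightarrow> b i \<in> f i" and s: "(\<Sum>i\<in>I. a i) = (\<Sum>i\<in>I. b i)" and i: "i \<in> I"
  shows "a i = b i"
proof -
  have sub: "\<And>i. i \<in> I \<Longrightarrow> vec.subspace (f i)" using d unfolding dsum_def by blast
  have "(\<lambda>i. a i - b i) i = 0"
    by (rule dsum_indep[OF d _ _ i]) (auto simp: sum_subtractf s intro: vec.subspace_diff sub a b)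
  then show ?thesis by simp
qed

lemma dsum_list:
  "is_direct_sum_decomp Vs \<longleftrightarrow> dsum {..<length Vs} (\<lambda>j. Vs ! j)"
proof
  assume H: "is_direct_sum_decomp Vs"
  have sub: "\<forall>j<length Vs. vec.subspace (Vs ! j)" using H unfolding is_direct_sum_decomp_def by auto
  show "dsum {..<length Vs} (\<lambda>j. Vs ! j)"
    unfolding dsum_def
  proof (intro conjI allI impI ballI)
    show "finite {..<length Vs}" by simp
    fix i assume "i \<in> {..<length Vs}" then show "vec.subspace (Vs ! i)" using sub by auto
  next
    fix v
    show "\<exists>u. (\<forall>i\<in>{..<length Vs}. u i \<in> Vs ! i) \<and> v = sum u {..<length Vs}"
      using H unfolding is_direct_sum_decomp_def by (metis lessThan_iff)
  next
    fix u i assume A: "(\<forall>i\<in>{..<length Vs}. u i \<in> Vs ! i) \<and> sum u {..<length Vs} = 0"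
      and i: "i \<in> {..<length Vs}"
    define u' where "u' j = (if j < length Vs then u j else 0)" for j
    have s': "sum u' {..<length Vs} = 0" using A by (simp add: u'_def)
    have E0: "\<forall>v. \<exists>!w. (\<forall>j < length Vs. w j \<in> Vs ! j) \<and> (\<forall>j \<ge> length Vs. w j = 0) \<and> v = (\<Sum>j < length Vs. w j)"
      using H unfolding is_direct_sum_decomp_def by (rule conjunct2)
    have E: "\<exists>!w. (\<forall>j < length Vs. w j \<in> Vs ! j) \<and> (\<forall>j \<ge> length Vs. w j = 0) \<and> 0 = (\<Sum>j < length Vs. w j)"
      (is "\<exists>!w. ?Q w") using spec[OF E0, of 0] .
    have P1: "?Q u'"
      using A s' by (auto simp: u'_def)
    have P2: "?Q (\<lambda>_. 0)"
      using sub by (auto intro: vec.subspace_0)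
    have "u' = (\<lambda>_. 0)" using E P1 P2 by (metis (no_types, lifting) ex1E)
    then show "u i = 0" using i by (metis lessThan_iff u'_def)
  qed
next
  assume D: "dsum {..<length Vs} (\<lambda>j. Vs ! j)"
  have sub: "\<forall>V\<in>set Vs. vec.subspace V" using D unfolding dsum_def by (auto simp: in_set_conv_nth)
  show "is_direct_sum_decomp Vs"
    unfolding is_direct_sum_decomp_def
  proof (intro conjI sub allI)
    fix v :: "'a^'b"
    obtain u where u: "\<And>i. i \<in> {..<length Vs} \<Longrightarrow> u i \<in> Vs ! i" "v = (\<Sum>i\<in>{..<length Vs}. u i)"
      using dsum_ex[OF D] by metis
    define u' where "u' j = (if j < length Vs then u j else 0)" for j
    show "\<exists>!u. (\<forall>j<length Vs. u j \<in> Vs ! j) \<and> (\<forall>j\<ge>length Vs. u j = 0) \<and> v = sum u {..<length Vs}"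
    proof (rule ex1I[where a=u'])
      show "(\<forall>j<length Vs. u' j \<in> Vs ! j) \<and> (\<forall>j\<ge>length Vs. u' j = 0) \<and> v = sum u' {..<length Vs}"
        using u by (auto simp: u'_def)
    next
      fix w assume w: "(\<forall>j<length Vs. w j \<in> Vs ! j) \<and> (\<forall>j\<ge>length Vs. w j = 0) \<and> v = sum w {..<length Vs}"
      show "w = u'"
      proof
        fix j show "w j = u' j"
        proof (cases "j < length Vs")
          case True
          have "w j = u j"
            by (rule dsum_uniq[OF D, of w u]) (use w u True in auto)
          then show ?thesis using True by (simp add: u'_def)
        qed (use w in \<open>auto simp: u'_def\<close>)
      qed
    qed
  qed
qed

lemma dsum_reindex:
  assumes d: "dsum I f" and b: "bij_betw g J I"
  shows "dsum J (f \<circ> g)"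
proof -
  have fin: "finite J" using d b bij_betw_finite unfolding dsum_def by blast
  have sub: "\<forall>j\<in>J. vec.subspace (f (g j))" using d b unfolding dsum_def bij_betw_def by auto
  have ex: "\<exists>w. (\<forall>j\<in>J. w j \<in> (f \<circ> g) j) \<and> v = (\<Sum>j\<in>J. w j)" for v
  proof -
    obtain u where u: "\<And>i. i \<in> I \<Longrightarrow> u i \<in> f i" "v = (\<Sum>i\<in>I. u i)" using dsum_ex[OF d] by metis
    have "v = (\<Sum>j\<in>J. u (g j))" using u(2) sum.reindex_bij_betw[OF b, of u] by simp
    moreover have "\<forall>j\<in>J. u (g j) \<in> (f \<circ> g) j" using u(1) b by (auto simp: bij_betw_def)
    ultimately show ?thesis by (intro exI[where x="\<lambda>j. u (g j)"]) auto
  qed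
  have ind: "\<forall>j\<in>J. w j = 0" if w: "\<forall>j\<in>J. w j \<in> (f \<circ> g) j" "(\<Sum>j\<in>J. w j) = 0" for w
  proof
    fix j assume j: "j \<in> J"
    define u where "u i = w (inv_into J g i)" for i
    have ug: "u (g j) = w j" if "j \<in> J" for j
      using b that by (simp add: u_def bij_betw_def inv_into_f_f)
    have "(\<Sum>i\<in>I. u i) = (\<Sum>j\<in>J. u (g j))" using sum.reindex_bij_betw[OF b, of u] by simp
    also have "\<dots> = 0" using w(2) ug by simp
    finally have s: "(\<Sum>i\<in>I. u i) = 0" .
    have uI: "u i \<in> f i" if iI: "i \<in> I" for i
    proof -
      obtain j where "j \<in> J" "i = g j" using b iI unfolding bij_betw_def by blast
      then show ?thesis using w(1) ug by auto
    qed
    have gj: "g j \<in> I" using b j by (meson bij_betwE)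
    have "u (g j) = 0" by (rule dsum_indep[OF d uI s gj])
    then show "w j = 0" using ug j by simp
  qed
  show ?thesis unfolding dsum_def using fin sub ex ind by auto
qed

lemma dsum_restrict:
  assumes d: "dsum I f" and J: "J \<subseteq> I" and z: "\<And>i. i \<in> I - J \<Longrightarrow> f i = {0}"
  shows "dsum J f"
proof -
  have finI: "finite I" using d unfolding dsum_def by blast
  have fin: "finite J" using d J finite_subset unfolding dsum_def by blast
  have sub: "\<forall>j\<in>J. vec.subspace (f j)" using d J unfolding dsum_def by auto
  have ex: "\<exists>w. (\<forall>j\<in>J. w j \<in> f j) \<and> v = (\<Sum>j\<in>J. w j)" for v
  proof -
    obtain u where u: "\<And>i. i \<in> I \<Longrightarrow> u i \<in> f i" "v = (\<Sum>i\<in>I. u i)" using dsum_ex[OF d] by metis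
    have "(\<Sum>i\<in>I. u i) = (\<Sum>i\<in>J. u i)"
      by (rule sum.mono_neutral_right[OF finI J]) (use u z in auto)
    then show ?thesis using u J by auto
  qed
  have ind: "\<forall>j\<in>J. w j = 0" if w: "\<forall>j\<in>J. w j \<in> f j" "(\<Sum>j\<in>J. w j) = 0" for w
  proof
    fix j assume j: "j \<in> J"
    define u where "u i = (if i \<in> J then w i else 0)" for i
    have "(\<Sum>i\<in>I. u i) = (\<Sum>i\<in>J. u i)"
      by (rule sum.mono_neutral_right[OF finI J]) (auto simp: u_def)
    also have "\<dots> = 0" using w(2) by (simp add: u_def)
    finally have s: "(\<Sum>i\<in>I. u i) = 0" .
    have uI: "u i \<in> f i" if "i \<in> I" for i
      using w(1) z that by (auto simp: u_def)
    have "u j = 0" by (rule dsum_indep[OF d uI s]) (use J j in auto)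
    then show "w j = 0" using j by (simp add: u_def)
  qed
  show ?thesis unfolding dsum_def using fin sub ex ind by auto
qed

lemma dsum_two:
  assumes d: "dsum I f" and "j \<in> I" "k \<in> I" "j \<noteq> k" "v \<in> f j" "v \<in> f k"
  shows "v = 0"
proof -
  have finI: "finite I" and sub: "\<And>i. i \<in> I \<Longrightarrow> vec.subspace (f i)" using d unfolding dsum_def by auto
  define u where "u i = (if i = j then v else 0) + (if i = k then -v else 0)" for i
  have uI: "u i \<in> f i" if "i \<in> I" for i
    using assms sub[OF that] by (auto simp: u_def intro: vec.subspace_0 vec.subspace_neg)
  have s: "(\<Sum>i\<in>I. u i) = 0"
    unfolding u_def sum.distrib using assms finI by (simp add: sum.delta)
  have "u j = 0" by (rule dsum_indep[OF d uI s]) (use assms in auto)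
  then show ?thesis using assms by (simp add: u_def)
qed

definition sumset :: "'i set \<Rightarrow> ('i \<Rightarrow> ('a::field ^ 'n) set) \<Rightarrow> ('a ^ 'n) set" where
  "sumset I f = {x. \<exists>u. (\<forall>i\<in>I. u i \<in> f i) \<and> x = (\<Sum>i\<in>I. u i)}"

lemma sumset_span:
  assumes fin: "finite I" and sub: "\<And>i. i \<in> I \<Longrightarrow> vec.subspace (f i)"
  shows "vec.span (\<Union>i\<in>I. f i) \<subseteq> sumset I f"
proof (rule vec.span_minimal)
  show "(\<Union>i\<in>I. f i) \<subseteq> sumset I f"
  proof
    fix x assume "x \<in> (\<Union>i\<in>I. f i)"
    then obtain k where k: "k \<in> I" "x \<in> f k" by blast
    define u where "u i = (if i = k then x else 0)" for i
    have "\<forall>i\<in>I. u i \<in> f i" using k sub by (auto simp: u_def intro: vec.subspace_0)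
    moreover have "x = (\<Sum>i\<in>I. u i)" using k fin by (simp add: u_def sum.delta)
    ultimately show "x \<in> sumset I f" unfolding sumset_def by blast
  qed
  show "vec.subspace (sumset I f)"
    unfolding vec.subspace_def
  proof (intro conjI ballI allI)
    show "0 \<in> sumset I f" unfolding sumset_def
      by (rule CollectI, rule exI[where x="\<lambda>_. 0"]) (auto intro: vec.subspace_0 sub)
  next
    fix x y assume "x \<in> sumset I f" "y \<in> sumset I f"
    then obtain a b where "\<forall>i\<in>I. a i \<in> f i" "x = (\<Sum>i\<in>I. a i)" "\<forall>i\<in>I. b i \<in> f i" "y = (\<Sum>i\<in>I. b i)"
      unfolding sumset_def by blast
    then show "x + y \<in> sumset I f" unfolding sumset_def
      by (intro CollectI exI[where x="\<lambda>i. a i + b i"]) (auto simp: sum.distrib intro: vec.subspace_add sub)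
  next
    fix c x assume "x \<in> sumset I f"
    then obtain a where "\<forall>i\<in>I. a i \<in> f i" "x = (\<Sum>i\<in>I. a i)"
      unfolding sumset_def by blast
    then show "c *s x \<in> sumset I f" unfolding sumset_def
      by (intro CollectI exI[where x="\<lambda>i. c *s a i"]) (auto simp: vec.scale_sum_right intro: vec.subspace_scale sub)
  qed
qed

lemma dsum_not_in_others:
  assumes d: "dsum I f" and j: "j \<in> I" and x: "x \<in> f j" and xs: "x \<in> vec.span (\<Union>i\<in>I-{j}. f i)"
  shows "x = 0"
proof -
  have finI: "finite I" and sub: "\<And>i. i \<in> I \<Longrightarrow> vec.subspace (f i)" using d unfolding dsum_def by auto
  have "x \<in> sumset (I-{j}) f" using sumset_span[of "I-{j}" f] finI sub xs by auto
  then obtain u where u: "\<forall>i\<in>I-{j}. u i \<in> f i" "x = (\<Sum>i\<in>I-{j}. u i)" unfolding sumset_def by blast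
  define w where "w i = (if i = j then -x else u i)" for i
  have wI: "w i \<in> f i" if "i \<in> I" for i using u x sub[OF that] that by (auto simp: w_def intro: vec.subspace_neg)
  have "(\<Sum>i\<in>I. w i) = w j + (\<Sum>i\<in>I-{j}. w i)" using finI j by (simp add: sum.remove)
  also have "(\<Sum>i\<in>I-{j}. w i) = (\<Sum>i\<in>I-{j}. u i)" by (rule sum.cong) (auto simp: w_def)
  finally have s: "(\<Sum>i\<in>I. w i) = 0" using u by (simp add: w_def)
  have "w j = 0" by (rule dsum_indep[OF d wI s j])
  then show ?thesis by (simp add: w_def)
qed


lemma dsum_cong:
  assumes "dsum I f" "\<And>i. i \<in> I \<Longrightarrow> f i = g i"
  shows "dsum I g"
  using assms unfolding dsum_def by (smt (verit, ccfv_threshold))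

lemma dsum_refine:
  fixes C :: "'m \<Rightarrow> 'a::field ^ 'n"
  assumes dI: "dsum I f" and dJ: "dsum J g"
    and cf: "\<And>c. \<exists>i\<in>I. C c \<in> f i" and cg: "\<And>c. \<exists>j\<in>J. C c \<in> g j"
    and sp: "vec.span (range C) = UNIV"
  shows "dsum (I \<times> J) (\<lambda>p. f (fst p) \<inter> g (snd p))"
proof -
  let ?h = "\<lambda>p. f (fst p) \<inter> g (snd p)"
  have finI: "finite I" and subI: "\<And>i. i \<in> I \<Longrightarrow> vec.subspace (f i)" using dI unfolding dsum_def by auto
  have finJ: "finite J" and subJ: "\<And>i. i \<in> J \<Longrightarrow> vec.subspace (g i)" using dJ unfolding dsum_def by auto
  have fin: "finite (I \<times> J)" using finI finJ by simp
  have sub: "\<forall>p\<in>I \<times> J. vec.subspace (?h p)" using subI subJ by (auto intro: vec.subspace_inter)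
  have "range C \<subseteq> (\<Union>p\<in>I \<times> J. ?h p)"
  proof
    fix x assume "x \<in> range C"
    then obtain c where x: "x = C c" by blast
    obtain i j where "i \<in> I" "C c \<in> f i" "j \<in> J" "C c \<in> g j" using cf cg by blast
    then show "x \<in> (\<Union>p\<in>I \<times> J. ?h p)" using x by force
  qed
  then have "vec.span (range C) \<subseteq> vec.span (\<Union>p\<in>I \<times> J. ?h p)" by (rule vec.span_mono)
  also have "\<dots> \<subseteq> sumset (I \<times> J) ?h" by (rule sumset_span) (use fin sub in auto)
  finally have ex: "\<exists>u. (\<forall>p\<in>I \<times> J. u p \<in> ?h p) \<and> v = (\<Sum>p\<in>I \<times> J. u p)" for v
    using sp unfolding sumset_def by blast
  have ind: "\<forall>p\<in>I \<times> J. u p = 0" if u: "\<forall>p\<in>I \<times> J. u p \<in> ?h p" "(\<Sum>p\<in>I \<times> J. u p) = 0" for u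
  proof
    fix p assume p: "p \<in> I \<times> J"
    obtain i j where pij: "p = (i, j)" "i \<in> I" "j \<in> J" using p by blast
    have s1: "(\<Sum>k\<in>I. \<Sum>l\<in>J. u (k, l)) = 0" using u(2) by (simp add: sum.cartesian_product)
    have ink: "(\<Sum>l\<in>J. u (k, l)) \<in> f k" if "k \<in> I" for k
      by (rule vec.subspace_sum[OF subI[OF that]]) (use u(1) that in auto)
    have z: "(\<Sum>l\<in>J. u (i, l)) = 0"
      by (rule dsum_indep[OF dI, where u="\<lambda>k. \<Sum>l\<in>J. u (k, l)"]) (use ink s1 pij in auto)
    have "u (i, j) = 0"
      by (rule dsum_indep[OF dJ, where u="\<lambda>l. u (i, l)"]) (use u(1) z pij in auto)
    then show "u p = 0" using pij by simp
  qed
  show ?thesis unfolding dsum_def using fin sub ex ind by blast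
qed

lemma dsum_piece:
  assumes dI: "dsum I f" and R: "dsum (I \<times> J) (\<lambda>p. f (fst p) \<inter> g (snd p))"
    and finJ: "finite J" and i: "i \<in> I" and v: "v \<in> f i"
  shows "\<exists>w. (\<forall>j\<in>J. w j \<in> f i \<inter> g j) \<and> v = (\<Sum>j\<in>J. w j)"
proof -
  have finI: "finite I" and subI: "\<And>i. i \<in> I \<Longrightarrow> vec.subspace (f i)" using dI unfolding dsum_def by auto
  obtain u where u: "\<And>p. p \<in> I \<times> J \<Longrightarrow> u p \<in> f (fst p) \<inter> g (snd p)" "v = (\<Sum>p\<in>I \<times> J. u p)"
    using dsum_ex[OF R] by metis
  have a: "(\<Sum>l\<in>J. u (k, l)) \<in> f k" if "k \<in> I" for k
    by (rule vec.subspace_sum[OF subI[OF that]]) (use u(1) that in auto)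
  have b: "(if k = i then v else 0) \<in> f k" if "k \<in> I" for k
    using v subI[OF that] by (auto intro: vec.subspace_0)
  have "(\<Sum>k\<in>I. \<Sum>l\<in>J. u (k, l)) = v" using u(2) by (simp add: sum.cartesian_product)
  also have "\<dots> = (\<Sum>k\<in>I. (if k = i then v else 0))" using finI i by (simp add: sum.delta)
  finally have "(\<Sum>l\<in>J. u (i, l)) = (if i = i then v else 0)"
    by (intro dsum_uniq[OF dI, where a="\<lambda>k. \<Sum>l\<in>J. u (k, l)" and b="\<lambda>k. if k = i then v else 0"] a b i)
  then have "v = (\<Sum>l\<in>J. u (i, l))" by simp
  moreover have "\<forall>j\<in>J. u (i, j) \<in> f i \<inter> g j" using u(1) i by force
  ultimately show ?thesis by (intro exI[where x="\<lambda>l. u (i, l)"]) auto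
qed

lemma dsum_nz_col:
  fixes C :: "'m \<Rightarrow> 'a::field ^ 'n"
  assumes d: "dsum I f" and cf: "\<And>c. \<exists>i\<in>I. C c \<in> f i"
    and sp: "vec.span (range C) = UNIV" and j: "j \<in> I" and nz: "f j \<noteq> {0}"
  shows "\<exists>c. C c \<in> f j \<and> C c \<noteq> 0"
proof (rule ccontr)
  assume H: "\<not> (\<exists>c. C c \<in> f j \<and> C c \<noteq> 0)"
  have subj: "vec.subspace (f j)" using d j unfolding dsum_def by auto
  then obtain x where x: "x \<in> f j" "x \<noteq> 0" using nz vec.subspace_0 by blast
  have "range C \<subseteq> vec.span (\<Union>i\<in>I-{j}. f i)"
  proof
    fix y assume "y \<in> range C"
    then obtain c where y: "y = C c" by blast
    obtain i where i: "i \<in> I" "C c \<in> f i" using cf by blast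
    show "y \<in> vec.span (\<Union>i\<in>I-{j}. f i)"
    proof (cases "i = j")
      case True then have "y = 0" using H i y by blast
      then show ?thesis by (simp add: vec.span_zero)
    next
      case False then show ?thesis using i y by (auto intro: vec.span_base)
    qed
  qed
  then have "vec.span (range C) \<subseteq> vec.span (\<Union>i\<in>I-{j}. f i)"
    by (metis vec.span_minimal vec.subspace_span)
  then have "x \<in> vec.span (\<Union>i\<in>I-{j}. f i)" using sp by auto
  then have "x = 0" by (rule dsum_not_in_others[OF d j x(1)])
  then show False using x by simp
qed


lemma valid_dsum:
  assumes "is_direct_sum_decomp Ws" "columns_in_summands A Ws"
  shows "dsum {..<length Ws} (\<lambda>j. Ws ! j)" "\<And>c. \<exists>i\<in>{..<length Ws}. column c A \<in> Ws ! i"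
proof -
  show "dsum {..<length Ws} (\<lambda>j. Ws ! j)" using assms(1) dsum_list by auto
  fix c
  obtain V where "V \<in> set Ws" "column c A \<in> V" using assms(2) unfolding columns_in_summands_def by blast
  then show "\<exists>i\<in>{..<length Ws}. column c A \<in> Ws ! i" by (metis in_set_conv_nth lessThan_iff)
qed

lemma nz_distinct:
  assumes d: "dsum {..<length Ws} (\<lambda>j. Ws ! j)" and nz: "\<forall>V\<in>set Ws. V \<noteq> {0}"
  shows "distinct Ws"
proof (subst distinct_conv_nth, intro allI impI)
  fix j k assume jk: "j < length Ws" "k < length Ws" "j \<noteq> k"
  show "Ws ! j \<noteq> Ws ! k"
  proof
    assume eq: "Ws ! j = Ws ! k"
    have "vec.subspace (Ws ! j)" using d jk unfolding dsum_def by auto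
    moreover have "Ws ! j \<noteq> {0}" using nz jk by auto
    ultimately obtain x where x: "x \<in> Ws ! j" "x \<noteq> 0" using vec.subspace_0 by blast
    have "x = 0" by (rule dsum_two[OF d, of j k]) (use jk x eq in auto)
    then show False using x by simp
  qed
qed

lemma set_sub_lemma:
  assumes d: "dsum {..<length X} (\<lambda>j. X ! j)" and nz: "\<forall>V\<in>set X. V \<noteq> {0}"
    and XY: "\<forall>V\<in>set X. \<exists>W\<in>set Y. V \<subseteq> W" and YX: "\<forall>W\<in>set Y. \<exists>V\<in>set X. W \<subseteq> V"
  shows "set X \<subseteq> set Y"
proof
  fix V assume V: "V \<in> set X"
  then obtain W where W: "W \<in> set Y" "V \<subseteq> W" using XY by blast
  then obtain V2 where V2: "V2 \<in> set X" "W \<subseteq> V2" using YX by blast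
  obtain j where j: "j < length X" "V = X ! j" using V by (auto simp: in_set_conv_nth)
  obtain k where k: "k < length X" "V2 = X ! k" using V2 by (auto simp: in_set_conv_nth)
  have "vec.subspace V" using d j unfolding dsum_def by auto
  moreover have "V \<noteq> {0}" using nz V by auto
  ultimately obtain x where x: "x \<in> V" "x \<noteq> 0" using vec.subspace_0 by blast
  have "j = k"
  proof (rule ccontr)
    assume "j \<noteq> k"
    have "x = 0" by (rule dsum_two[OF d, of j k]) (use j k x W V2 \<open>j \<noteq> k\<close> in auto)
    then show False using x by simp
  qed
  then have "V = W" using W V2 j k by auto
  then show "V \<in> set Y" using W by simp
qed


lemma dsum_UNIV: "dsum {..<Suc 0} (\<lambda>_. UNIV :: ('a::field^'n) set)"
  unfolding dsum_def
proof (intro conjI allI)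
  fix v :: "'a^'n"
  show "\<exists>u. (\<forall>i\<in>{..<Suc 0}. u i \<in> UNIV) \<and> v = (\<Sum>i\<in>{..<Suc 0}. u i)"
    by (rule exI[where x="\<lambda>_. v"]) simp
qed (auto intro: vec.subspace_UNIV)

theorem lemma3p5:
  fixes A :: "complex ^ 'm ^ 'n"
  assumes full_rank: "rank A = CARD('n)"
    and pairwise_indep: "\<And>i j x y. i \<noteq> j \<Longrightarrow>
           x *s column i A + y *s column j A = 0 \<Longrightarrow> x = 0 \<and> y = 0"
  shows "\<exists>Vs. (is_direct_sum_decomp Vs \<and> (\<forall>V \<in> set Vs. V \<noteq> {0}) \<and>
               columns_in_summands A Vs \<and>
               (\<forall>Ws. is_direct_sum_decomp Ws \<and> columns_in_summands A Ws \<longrightarrow>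
                     (\<forall>V \<in> set Vs. \<exists>W \<in> set Ws. V \<subseteq> W)))
          \<and> (\<forall>Vs'. is_direct_sum_decomp Vs' \<and> (\<forall>V \<in> set Vs'. V \<noteq> {0}) \<and>
                    columns_in_summands A Vs' \<and>
                    (\<forall>Ws. is_direct_sum_decomp Ws \<and> columns_in_summands A Ws \<longrightarrow>
                          (\<forall>V \<in> set Vs'. \<exists>W \<in> set Ws. V \<subseteq> W))
                 \<longrightarrow> mset Vs' = mset Vs)"
proof -
  define C where "C c = column c A" for c
  have sp: "vec.span (range C) = UNIV" using cols_span[OF full_rank] by (simp add: C_def)
  have one_nz: "(1::complex^'n) \<noteq> 0" by (simp add: vec_eq_iff)
  have cnz: "C c \<noteq> 0" for c
  proof
    assume c0: "C c = 0"
    show False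
    proof (cases "\<exists>d. d \<noteq> c")
      case True
      then obtain d where "d \<noteq> c" by blast
      from pairwise_indep[OF this[symmetric], of 1 0] c0 show False by (simp add: C_def)
    next
      case False
      then have "range C = {0}" using c0 by auto
      then have "vec.span (range C) = {0}" by simp
      then show False using sp one_nz by auto
    qed
  qed
  define P where "P Ws \<longleftrightarrow> is_direct_sum_decomp Ws \<and> columns_in_summands A Ws \<and> (\<forall>V\<in>set Ws. V \<noteq> {0})"
    for Ws :: "(complex^'n) set list"
  have Pd: "dsum {..<length Ws} (\<lambda>j. Ws ! j)" "\<And>c. \<exists>i\<in>{..<length Ws}. C c \<in> Ws ! i"
    "\<forall>V\<in>set Ws. V \<noteq> {0}" if "P Ws" for Ws
    using valid_dsum[of Ws A] that unfolding P_def C_def by auto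
  have bound: "length Ws \<le> CARD('m)" if "P Ws" for Ws
  proof -
    note d = Pd[OF that]
    define col where "col j = (SOME c. C c \<in> Ws ! j \<and> C c \<noteq> 0)" for j
    have col: "C (col j) \<in> Ws ! j \<and> C (col j) \<noteq> 0" if "j < length Ws" for j
    proof -
      have "\<exists>c. C c \<in> Ws ! j \<and> C c \<noteq> 0"
        by (rule dsum_nz_col[OF d(1) d(2) sp]) (use that d(3) in auto)
      then show ?thesis unfolding col_def by (rule someI_ex)
    qed
    have "inj_on col {..<length Ws}"
    proof (rule inj_onI)
      fix j k assume jk: "j \<in> {..<length Ws}" "k \<in> {..<length Ws}" "col j = col k"
      show "j = k"
      proof (rule ccontr)
        assume "j \<noteq> k"
        have "C (col j) = 0" by (rule dsum_two[OF d(1), of j k]) (use jk col[of j] col[of k] \<open>j \<noteq> k\<close> in auto)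
        then show False using col jk by auto
      qed
    qed
    then have "card {..<length Ws} \<le> card (UNIV :: 'm set)"
      by (rule card_inj_on_le) auto
    then show ?thesis by simp
  qed
  have PU: "P [UNIV]"
  proof -
    have "dsum {..<length [UNIV]} (\<lambda>j. [UNIV :: (complex^'n) set] ! j)"
      using dsum_cong[OF dsum_UNIV, of "\<lambda>j. [UNIV :: (complex^'n) set] ! j"] by simp
    then show ?thesis unfolding P_def columns_in_summands_def using one_nz
      by (auto simp: dsum_list)
  qed
  have "\<exists>x. (\<exists>Ws. P Ws \<and> length Ws = x) \<and> (\<forall>y. (\<exists>Ws. P Ws \<and> length Ws = y) \<longrightarrow> y \<le> x)"
  proof (rule Nat.ex_has_greatest_nat[where k=1 and b="CARD('m)"])
    show "\<exists>Ws. P Ws \<and> length Ws = 1" using PU by (intro exI[where x="[UNIV]"]) simp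
    show "\<forall>y. (\<exists>Ws. P Ws \<and> length Ws = y) \<longrightarrow> y \<le> CARD('m)" using bound by blast
  qed
  then obtain n Vs where Vs: "P Vs" "length Vs = n" and nmax: "\<forall>y. (\<exists>Ws. P Ws \<and> length Ws = y) \<longrightarrow> y \<le> n"
    by blast
  have maxi: "length Ws \<le> length Vs" if "P Ws" for Ws using nmax that Vs(2) by blast
  note Vs = Vs(1)
  note dV = Pd[OF Vs]
  have minimal: "\<forall>V \<in> set Vs. \<exists>W \<in> set Ws. V \<subseteq> W"
    if Ws: "is_direct_sum_decomp Ws" "columns_in_summands A Ws" for Ws
  proof (rule ccontr)
    assume "\<not> (\<forall>V \<in> set Vs. \<exists>W \<in> set Ws. V \<subseteq> W)"
    then obtain i where i: "i < length Vs" and notin: "\<forall>W\<in>set Ws. \<not> Vs ! i \<subseteq> W"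
      by (metis in_set_conv_nth)
    define a where "a = length Vs"
    define b where "b = length Ws"
    have dW: "dsum {..<b} (\<lambda>j. Ws ! j)" "\<And>c. \<exists>j\<in>{..<b}. C c \<in> Ws ! j"
      using valid_dsum[OF Ws] unfolding b_def C_def by auto
    define h where "h p = Vs ! fst p \<inter> Ws ! snd p" for p
    have R: "dsum ({..<a} \<times> {..<b}) h"
      unfolding h_def a_def by (rule dsum_refine[OF dV(1) dW(1) dV(2) dW(2) sp])
    have R': "dsum ({..<length Vs} \<times> {..<b}) (\<lambda>p. Vs ! fst p \<inter> Ws ! snd p)"
      using R unfolding h_def a_def .
    define K where "K = {p \<in> {..<a} \<times> {..<b}. h p \<noteq> {0}}"
    have dK: "dsum K h" by (rule dsum_restrict[OF R]) (auto simp: K_def)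
    define xs where "xs = filter (\<lambda>p. h p \<noteq> {0}) (List.product [0..<a] [0..<b])"
    have dxs: "distinct xs" by (simp add: xs_def distinct_product)
    have sxs: "set xs = K" by (auto simp: xs_def K_def)
    have "dsum {..<length xs} (h \<circ> (\<lambda>j. xs ! j))"
      by (rule dsum_reindex[OF dK bij_betw_nth[OF dxs refl sxs[symmetric]]])
    then have "dsum {..<length xs} (\<lambda>j. map h xs ! j)"
      by (rule dsum_cong) auto
    then have "dsum {..<length (map h xs)} (\<lambda>j. map h xs ! j)" by simp
    then have D1: "is_direct_sum_decomp (map h xs)" by (simp add: dsum_list)
    have D2: "columns_in_summands A (map h xs)"
      unfolding columns_in_summands_def
    proof
      fix c
      obtain k j where kj: "k \<in> {..<a}" "C c \<in> Vs ! k" "j \<in> {..<b}" "C c \<in> Ws ! j"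
        using dV(2) dW(2) unfolding a_def by blast
      have "(k, j) \<in> K" using kj cnz[of c] by (auto simp: K_def h_def)
      then have "h (k, j) \<in> set (map h xs)" using sxs by auto
      moreover have "column c A \<in> h (k, j)" using kj by (simp add: h_def C_def)
      ultimately show "\<exists>V\<in>set (map h xs). column c A \<in> V" by blast
    qed
    have D3: "\<forall>V\<in>set (map h xs). V \<noteq> {0}" using sxs by (auto simp: K_def)
    have "length (map h xs) \<le> a" using maxi[of "map h xs"] D1 D2 D3 unfolding P_def a_def by auto
    then have cK: "card K \<le> a" using distinct_card[OF dxs] sxs by simp
    have finK: "finite K" unfolding K_def by simp
    have subV: "vec.subspace (Vs ! k)" if "k < a" for k using dV(1) that unfolding dsum_def a_def by auto
    have finb: "finite {..<b}" by simp
    have cover: "\<exists>j<b. (k, j) \<in> K" if k: "k < a" for k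
    proof (rule ccontr)
      assume H: "\<not> (\<exists>j<b. (k, j) \<in> K)"
      have "Vs ! k \<noteq> {0}" using dV(3) k unfolding a_def by auto
      then obtain v where v: "v \<in> Vs ! k" "v \<noteq> 0" using subV[OF k] vec.subspace_0 by blast
      obtain w where w: "\<forall>j\<in>{..<b}. w j \<in> Vs ! k \<inter> Ws ! j" "v = (\<Sum>j\<in>{..<b}. w j)"
        using dsum_piece[OF dV(1) R' finb, of k v] k v unfolding a_def by auto
      have "\<forall>j\<in>{..<b}. w j = 0"
      proof
        fix j assume j: "j \<in> {..<b}"
        then have "h (k, j) = {0}" using H k by (auto simp: K_def)
        then show "w j = 0" using w(1) j by (auto simp: h_def)
      qed
      then have "v = 0" using w(2) by simp
      then show False using v by simp
    qed
    have two: "\<exists>j1 j2. j1 \<noteq> j2 \<and> (i, j1) \<in> K \<and> (i, j2) \<in> K"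
    proof (rule ccontr)
      assume H: "\<not> (\<exists>j1 j2. j1 \<noteq> j2 \<and> (i, j1) \<in> K \<and> (i, j2) \<in> K)"
      obtain j0 where j0: "j0 < b" "(i, j0) \<in> K" using cover i unfolding a_def by blast
      have "Vs ! i \<subseteq> Ws ! j0"
      proof
        fix v assume v: "v \<in> Vs ! i"
        obtain w where w: "\<forall>j\<in>{..<b}. w j \<in> Vs ! i \<inter> Ws ! j" "v = (\<Sum>j\<in>{..<b}. w j)"
          using dsum_piece[OF dV(1) R' finb, of i v] i v unfolding a_def by auto
        have wz: "\<forall>j\<in>{..<b}. w j = (if j = j0 then w j0 else 0)"
        proof
          fix j assume j: "j \<in> {..<b}"
          show "w j = (if j = j0 then w j0 else 0)"
          proof (cases "j = j0")
            case False
            then have "(i, j) \<notin> K" using H j0 by blast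
            then have "h (i, j) = {0}" using i j by (auto simp: K_def a_def)
            then show ?thesis using w(1) j False by (auto simp: h_def)
          qed simp
        qed
        have "(\<Sum>j\<in>{..<b}. w j) = (\<Sum>j\<in>{..<b}. (if j = j0 then w j0 else 0))"
          by (rule sum.cong[OF refl]) (use wz in blast)
        then have "v = (\<Sum>j\<in>{..<b}. (if j = j0 then w j0 else 0))" using w(2) by simp
        also have "\<dots> = w j0" using j0 by (simp add: sum.delta)
        finally show "v \<in> Ws ! j0" using w(1) j0 by auto
      qed
      then show False using notin j0 unfolding b_def by auto
    qed
    then obtain j1 j2 where j12: "j1 \<noteq> j2" "(i, j1) \<in> K" "(i, j2) \<in> K" by blast
    have "{..<a} \<subseteq> fst ` (K - {(i, j2)})"
    proof
      fix k assume k: "k \<in> {..<a}"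
      show "k \<in> fst ` (K - {(i, j2)})"
      proof (cases "k = i")
        case True
        have "(i, j1) \<in> K - {(i, j2)}" using j12 by auto
        then have "fst (i, j1) \<in> fst ` (K - {(i, j2)})" by (rule imageI)
        then show ?thesis using True by simp
      next
        case False
        obtain j where "(k, j) \<in> K" using cover k by blast
        then have "(k, j) \<in> K - {(i, j2)}" using False by auto
        then have "fst (k, j) \<in> fst ` (K - {(i, j2)})" by (rule imageI)
        then show ?thesis by simp
      qed
    qed
    then have "card {..<a} \<le> card (fst ` (K - {(i, j2)}))"
      by (intro card_mono) (use finK in auto)
    also have "\<dots> \<le> card (K - {(i, j2)})" by (rule card_image_le) (use finK in auto)
    also have "\<dots> = card K - 1" using j12 finK by simp
    finally have "a \<le> card K - 1" by simp
    moreover have "K \<noteq> {}" using j12 by auto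
    then have "card K \<ge> 1" using finK by (simp add: Suc_le_eq card_gt_0_iff)
    ultimately show False using cK by linarith
  qed
  have VsP: "is_direct_sum_decomp Vs \<and> (\<forall>V \<in> set Vs. V \<noteq> {0}) \<and> columns_in_summands A Vs"
    using Vs unfolding P_def by auto
  have part1: "is_direct_sum_decomp Vs \<and> (\<forall>V \<in> set Vs. V \<noteq> {0}) \<and>
               columns_in_summands A Vs \<and>
               (\<forall>Ws. is_direct_sum_decomp Ws \<and> columns_in_summands A Ws \<longrightarrow>
                     (\<forall>V \<in> set Vs. \<exists>W \<in> set Ws. V \<subseteq> W))"
    using VsP minimal by blast
  have part2: "\<forall>Vs'. is_direct_sum_decomp Vs' \<and> (\<forall>V \<in> set Vs'. V \<noteq> {0}) \<and>
                    columns_in_summands A Vs' \<and>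
                    (\<forall>Ws. is_direct_sum_decomp Ws \<and> columns_in_summands A Ws \<longrightarrow>
                          (\<forall>V \<in> set Vs'. \<exists>W \<in> set Ws. V \<subseteq> W))
                 \<longrightarrow> mset Vs' = mset Vs"
  proof (intro allI impI)
    fix Vs'
    assume H: "is_direct_sum_decomp Vs' \<and> (\<forall>V \<in> set Vs'. V \<noteq> {0}) \<and>
                    columns_in_summands A Vs' \<and>
                    (\<forall>Ws. is_direct_sum_decomp Ws \<and> columns_in_summands A Ws \<longrightarrow>
                          (\<forall>V \<in> set Vs'. \<exists>W \<in> set Ws. V \<subseteq> W))"
    have d': "dsum {..<length Vs'} (\<lambda>j. Vs' ! j)" using H dsum_list by auto
    have XY: "\<forall>V\<in>set Vs. \<exists>W\<in>set Vs'. V \<subseteq> W" using minimal H by blast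
    have YX: "\<forall>V\<in>set Vs'. \<exists>W\<in>set Vs. V \<subseteq> W" using H VsP by blast
    have "set Vs \<subseteq> set Vs'" by (rule set_sub_lemma[OF dV(1) dV(3) XY YX])
    moreover have "set Vs' \<subseteq> set Vs" by (rule set_sub_lemma[OF d' _ YX XY]) (use H in blast)
    ultimately have "set Vs' = set Vs" by blast
    moreover have "distinct Vs" by (rule nz_distinct[OF dV(1) dV(3)])
    moreover have "distinct Vs'" by (rule nz_distinct[OF d']) (use H in blast)
    ultimately show "mset Vs' = mset Vs" by (simp add: set_eq_iff_mset_eq_distinct)
  qed
  show ?thesis using part1 part2 by blast
qed

end
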